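(* Let $A[0\ldots n-1]$, $B[0\ldots m-1]$ be sequences over a totally ordered alphabet, let $V=\{(i,j)\mid A[i]=B[j]\}$ and $E=\{(u,v)\mid u=(i,j),\,v=(i',j')\in V,\ i<i',\ j<j',\ A[i]<A[i']\}$. In the forward pass of the sparse-DAG algorithm described in the context, immediately after the update of a vertex $v$ one has $INC[v]=1+\max_{(u,v)\in E}INC[u]$ (the maximum over an empty set being $0$). Analogously, in the backward pass, immediately after the update of $v=(i,j)$ one has $DEC[v]=1+\max DEC[w]$, the maximum taken over all $w=(i',j')\in V$ with $i<i'$, $j<j'$ and $A[i']<A[i]$ (empty maximum $0$).
   Context: Sparse-DAG algorithm: list all pairs $(i,j)\in V$ and sort them lexicographically by $(i$ ascending, $j$ ascending$)$. For each vertex $v=(i,j)$ let $r_J(v)$ be $1$ plus the rank of $j$ among the distinct column indices occurring in $V$, and $r_V(v)$ the rank (starting at $1$) of the value $A[i]$ among the sorted distinct values of $A\cup B$; let $MAX_J=\max_v r_J(v)$. A 2-D range structure stores points with integer keys $(x,y)$ and values, supports $\textsc{Query}(a,b)$ returning the maximum value over stored points with $x\le a$ and $y\le b$ (or $0$ if none), and $\textsc{Update}((x,y),val)$ inserting a point. Forward pass: starting from an empty structure, for each vertex $v$ in sorted order set $INC[v]\gets\textsc{Query}(r_J(v)-1,r_V(v)-1)+1$ and then $\textsc{Update}((r_J(v),r_V(v)),INC[v])$. Backward pass: starting from a new empty structure, for each vertex $v$ in reverse sorted order let $\widehat r_J(v)=MAX_J-r_J(v)+1$, set $DEC[v]\gets\textsc{Query}(\widehat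 r_J(v)-1,r_V(v)-1)+1$ and then $\textsc{Update}((\widehat r_J(v),r_V(v)),DEC[v])$. *)

theory Defs
  imports Main
begin

definition Vset :: "'a list \<Rightarrow> 'a list \<Rightarrow> (nat \<times> nat) set" where
  "Vset A B = {(i,j). i < length A \<and> j < length B \<and> A ! i = B ! j}"

definition Eset :: "('a::linorder) list \<Rightarrow> 'a list \<Rightarrow> ((nat \<times> nat) \<times> (nat \<times> nat)) set" where
  "Eset A B = {(u,v). u \<in> Vset A B \<and> v \<in> Vset A B \<and> fst u < fst v \<and> snd u < snd v
                      \<and> A ! fst u < A ! fst v}"

definition vlist :: "'a list \<Rightarrow> 'a list \<Rightarrow> (nat \<times> nat) list" where
  "vlist A B = concat (map (\<lambda>i. map (\<lambda>j. (i,j)) (filter (\<lambda>j. A ! i = B ! j) [0..<length B]))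
                           [0..<length A])"

definition cols :: "'a list \<Rightarrow> 'a list \<Rightarrow> nat set" where
  "cols A B = snd ` Vset A B"

definition rJ :: "'a list \<Rightarrow> 'a list \<Rightarrow> nat \<times> nat \<Rightarrow> nat" where
  "rJ A B v = 1 + card {j \<in> cols A B. j \<le> snd v}"

definition rV :: "('a::linorder) list \<Rightarrow> 'a list \<Rightarrow> nat \<times> nat \<Rightarrow> nat" where
  "rV A B v = card {x \<in> set A \<union> set B. x \<le> A ! fst v}"

definition maxJ :: "'a list \<Rightarrow> 'a list \<Rightarrow> nat" where
  "maxJ A B = Max (insert 0 (rJ A B ` Vset A B))"

(* 2-D range structure: a list of stored points ((x,y), value). *)
type_synonym rstruct = "((nat \<times> nat) \<times> nat) list"

definition rquery :: "rstruct \<Rightarrow> nat \<Rightarrow> nat \<Rightarrow> nat" where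
  "rquery S a b = Max (insert 0 {val. \<exists>x y. ((x,y),val) \<in> set S \<and> x \<le> a \<and> y \<le> b})"

definition rupdate :: "rstruct \<Rightarrow> nat \<times> nat \<Rightarrow> nat \<Rightarrow> rstruct" where
  "rupdate S p val = (p, val) # S"

definition fwd_step :: "('a::linorder) list \<Rightarrow> 'a list \<Rightarrow> rstruct \<times> (nat \<times> nat \<Rightarrow> nat)
    \<Rightarrow> nat \<times> nat \<Rightarrow> rstruct \<times> (nat \<times> nat \<Rightarrow> nat)" where
  "fwd_step A B st v =
     (let S = fst st; INC = snd st;
          val = rquery S (rJ A B v - 1) (rV A B v - 1) + 1
      in (rupdate S (rJ A B v, rV A B v) val, INC(v := val)))"

definition fwd_state :: "('a::linorder) list \<Rightarrow> 'a list \<Rightarrow> nat \<Rightarrow> rstruct \<times> (nat \<times> nat \<Rightarrow> nat)" where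
  "fwd_state A B k = foldl (fwd_step A B) ([], \<lambda>_. 0) (take k (vlist A B))"

definition bwd_step :: "('a::linorder) list \<Rightarrow> 'a list \<Rightarrow> rstruct \<times> (nat \<times> nat \<Rightarrow> nat)
    \<Rightarrow> nat \<times> nat \<Rightarrow> rstruct \<times> (nat \<times> nat \<Rightarrow> nat)" where
  "bwd_step A B st v =
     (let S = fst st; DEC = snd st;
          hrJ = maxJ A B - rJ A B v + 1;
          val = rquery S (hrJ - 1) (rV A B v - 1) + 1
      in (rupdate S (hrJ, rV A B v) val, DEC(v := val)))"

definition bwd_state :: "('a::linorder) list \<Rightarrow> 'a list \<Rightarrow> nat \<Rightarrow> rstruct \<times> (nat \<times> nat \<Rightarrow> nat)" where
  "bwd_state A B k = foldl (bwd_step A B) ([], \<lambda>_. 0) (take k (rev (vlist A B)))"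

end

theory Submission
  imports Defs
begin

definition gstep :: "(nat \<times> nat \<Rightarrow> nat \<times> nat) \<Rightarrow> rstruct \<times> (nat \<times> nat \<Rightarrow> nat)
    \<Rightarrow> nat \<times> nat \<Rightarrow> rstruct \<times> (nat \<times> nat \<Rightarrow> nat)" where
  "gstep P st v = (let val = rquery (fst st) (fst (P v) - 1) (snd (P v) - 1) + 1
     in (rupdate (fst st) (P v) val, (snd st)(v := val)))"

lemma fwd_gstep: "fwd_step A B = gstep (\<lambda>v. (rJ A B v, rV A B v))"
  by (intro ext) (simp add: fwd_step_def gstep_def Let_def)

lemma bwd_gstep: "bwd_step A B = gstep (\<lambda>v. (maxJ A B - rJ A B v + 1, rV A B v))"
  by (intro ext) (simp add: bwd_step_def gstep_def Let_def)

lemma inv_gstep: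
  "distinct ys \<Longrightarrow> set (fst (foldl (gstep P) ([], \<lambda>_. 0) ys))
     = (\<lambda>u. (P u, snd (foldl (gstep P) ([], \<lambda>_. 0) ys) u)) ` set ys"
proof (induction ys rule: rev_induct)
  case Nil
  then show ?case by simp
next
  case (snoc x ys)
  define st where "st = foldl (gstep P) ([], \<lambda>_. 0) ys"
  have IH: "set (fst st) = (\<lambda>u. (P u, snd st u)) ` set ys" using snoc st_def by simp
  have nx: "x \<notin> set ys" using snoc.prems by simp
  show ?case
    unfolding foldl_append foldl.simps st_def[symmetric]
    using IH nx by (auto simp: gstep_def Let_def rupdate_def image_iff)
qed

lemma key_gstep:
  assumes d: "distinct xs" and k: "k < length xs"
    and H: "\<And>u. (u \<in> set (take k xs) \<and> fst (P u) \<le> fst (P (xs!k)) - 1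
                   \<and> snd (P u) \<le> snd (P (xs!k)) - 1) \<longleftrightarrow> R u"
  shows "snd (foldl (gstep P) ([], \<lambda>_. 0) (take (Suc k) xs)) (xs!k)
     = 1 + Max (insert 0 {snd (foldl (gstep P) ([], \<lambda>_. 0) (take (Suc k) xs)) u | u. R u})"
proof -
  define st where "st = foldl (gstep P) ([], \<lambda>_. 0) (take k xs)"
  define v where "v = xs!k"
  have inv: "set (fst st) = (\<lambda>u. (P u, snd st u)) ` set (take k xs)"
    unfolding st_def using d by (intro inv_gstep) simp
  have nv: "v \<notin> set (take k xs)"
    using d k unfolding v_def
    by (auto simp: in_set_conv_nth nth_eq_iff_index_eq)
  define a where "a = fst (P v) - 1"
  define b where "b = snd (P v) - 1"
  define val where "val = rquery (fst st) a b + 1"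
  have fin: "snd (foldl (gstep P) ([], \<lambda>_. 0) (take (Suc k) xs)) = (snd st)(v := val)"
    unfolding take_Suc_conv_app_nth[OF k] foldl_append foldl.simps st_def[symmetric] v_def[symmetric]
    by (simp add: gstep_def Let_def val_def a_def b_def)
  have Rin: "R u \<Longrightarrow> u \<in> set (take k xs)" for u using H by blast
  have eq: "{val. \<exists>x y. ((x,y),val) \<in> set (fst st) \<and> x \<le> a \<and> y \<le> b}
      = {((snd st)(v := val)) u | u. R u}"
  proof (intro set_eqI iffI)
    fix z assume "z \<in> {val. \<exists>x y. ((x,y),val) \<in> set (fst st) \<and> x \<le> a \<and> y \<le> b}"
    then obtain x y where xy: "((x,y),z) \<in> set (fst st)" "x \<le> a" "y \<le> b" by auto
    then obtain u where u0: "u \<in> set (take k xs)" "((x,y),z) = (P u, snd st u)"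
      using inv by auto
    then have u: "u \<in> set (take k xs)" "z = snd st u" "fst (P u) \<le> a" "snd (P u) \<le> b"
      using xy by (auto dest: sym)
    have "R u" using H[of u] u unfolding a_def b_def v_def by auto
    moreover have "u \<noteq> v" using u nv by auto
    ultimately have "z = ((snd st)(v := val)) u \<and> R u" using u by simp
    then show "z \<in> {((snd st)(v := val)) u | u. R u}" by blast
  next
    fix z assume "z \<in> {((snd st)(v := val)) u | u. R u}"
    then obtain u where u: "R u" "z = ((snd st)(v := val)) u" by auto
    have h: "u \<in> set (take k xs)" "fst (P u) \<le> a" "snd (P u) \<le> b"
      using H[of u] u unfolding a_def b_def v_def by auto
    have "u \<noteq> v" using h nv by auto
    then have "((P u, snd st u)) \<in> set (fst st)" "z = snd st u" using inv h u by auto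
    then show "z \<in> {val. \<exists>x y. ((x,y),val) \<in> set (fst st) \<and> x \<le> a \<and> y \<le> b}"
      using h by (cases "P u") auto
  qed
  show ?thesis unfolding fin v_def[symmetric]
    using eq by (simp add: val_def rquery_def)
qed


definition lexlt :: "nat \<times> nat \<Rightarrow> nat \<times> nat \<Rightarrow> bool" where
  "lexlt u v \<longleftrightarrow> fst u < fst v \<or> (fst u = fst v \<and> snd u < snd v)"

lemma lexlt_asym: "lexlt x y \<Longrightarrow> \<not> lexlt y x"
  unfolding lexlt_def by auto

lemma sorted_gen:
  "sorted_wrt lexlt (concat (map (\<lambda>i. map (\<lambda>j. (i,j)) (filter (g i) [0..<m])) [0..<n]))"
proof (induction n)
  case 0
  then show ?case by simp
next
  case (Suc n)
  have s1: "sorted_wrt lexlt (map (\<lambda>j. (n,j)) (filter (g n) [0..<m]))"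
    unfolding sorted_wrt_map
    by (rule sorted_wrt_mono_rel[OF _ sorted_wrt_filter[OF sorted_wrt_upt]]) (auto simp: lexlt_def)
  show ?case using Suc s1 by (simp add: sorted_wrt_append) (auto simp: lexlt_def)
qed

lemma vlist_sorted: "sorted_wrt lexlt (vlist A B)"
  unfolding vlist_def by (rule sorted_gen)

lemma vlist_set: "set (vlist A B) = Vset A B"
  unfolding vlist_def Vset_def by auto

lemma sorted_distinct_gen:
  assumes "sorted_wrt lt xs" "\<And>x. \<not> lt x x" shows "distinct xs"
  using assms by (induction xs) auto

lemma vlist_distinct: "distinct (vlist A B)"
  by (rule sorted_distinct_gen[OF vlist_sorted]) (simp add: lexlt_def)

lemma take_mem:
  assumes s: "sorted_wrt lt xs" and asym: "\<And>x y. lt x y \<Longrightarrow> \<not> lt y x"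
    and k: "k < length xs" and u: "u \<in> set xs"
  shows "u \<in> set (take k xs) \<longleftrightarrow> lt u (xs!k)"
proof
  assume "u \<in> set (take k xs)"
  then obtain p where "p < k" "u = xs!p" by (auto simp: in_set_conv_nth)
  then show "lt u (xs!k)" using sorted_wrt_nth_less[OF s _ k] by simp
next
  assume l: "lt u (xs!k)"
  obtain p where p: "p < length xs" "u = xs!p" using u by (auto simp: in_set_conv_nth)
  have "p < k"
  proof (rule ccontr)
    assume "\<not> p < k"
    then have "p = k \<or> k < p" by auto
    then show False
    proof
      assume "p = k" then show False using l p asym by blast
    next
      assume "k < p" then have "lt (xs!k) u" using sorted_wrt_nth_less[OF s _ p(1)] p by simp
      then show False using l asym by blast
    qed
  qed
  then show "u \<in> set (take k xs)" using p by (auto simp: in_set_conv_nth)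
qed

lemma rank_lt:
  fixes C :: "'b::linorder set"
  assumes "finite C" "a \<in> C" "b \<in> C"
  shows "card {j \<in> C. j \<le> a} < card {j \<in> C. j \<le> b} \<longleftrightarrow> a < b"
proof
  assume "a < b"
  then have "b \<in> {j \<in> C. j \<le> b}" "b \<notin> {j \<in> C. j \<le> a}" using assms by auto
  moreover have "{j \<in> C. j \<le> a} \<subseteq> {j \<in> C. j \<le> b}" using \<open>a < b\<close> by auto
  ultimately have "{j \<in> C. j \<le> a} \<subset> {j \<in> C. j \<le> b}" by blast
  then show "card {j \<in> C. j \<le> a} < card {j \<in> C. j \<le> b}"
    by (rule psubset_card_mono[rotated]) (use assms in auto)
next
  assume c: "card {j \<in> C. j \<le> a} < card {j \<in> C. j \<le> b}"
  show "a < b"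
  proof (rule ccontr)
    assume "\<not> a < b"
    then have "{j \<in> C. j \<le> b} \<subseteq> {j \<in> C. j \<le> a}" by auto
    then have "card {j \<in> C. j \<le> b} \<le> card {j \<in> C. j \<le> a}"
      by (rule card_mono[rotated]) (use assms in auto)
    then show False using c by simp
  qed
qed

lemma Vset_finite: "finite (Vset A B)"
proof -
  have "Vset A B \<subseteq> {..<length A} \<times> {..<length B}" unfolding Vset_def by auto
  then show ?thesis by (rule finite_subset) auto
qed

lemma rJ_lt:
  assumes "u \<in> Vset A B" "v \<in> Vset A B"
  shows "rJ A B u < rJ A B v \<longleftrightarrow> snd u < snd v"
proof -
  have "finite (cols A B)" unfolding cols_def using Vset_finite[of A B] by simp
  moreover have "snd u \<in> cols A B" "snd v \<in> cols A B" using assms unfolding cols_def by auto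
  ultimately show ?thesis unfolding rJ_def using rank_lt[of "cols A B" "snd u" "snd v"] by simp
qed

lemma rV_lt:
  assumes "u \<in> Vset A B" "v \<in> Vset A B"
  shows "rV A B u < rV A B v \<longleftrightarrow> A ! fst u < A ! fst v"
proof -
  have "A ! fst u \<in> set A \<union> set B" "A ! fst v \<in> set A \<union> set B"
    using assms unfolding Vset_def by auto
  then show ?thesis unfolding rV_def using rank_lt[of "set A \<union> set B" "A ! fst u" "A ! fst v"] by simp
qed

lemma rJ_pos: "rJ A B u \<ge> 1" unfolding rJ_def by simp

lemma rV_pos: "v \<in> Vset A B \<Longrightarrow> rV A B v \<ge> 1"
proof -
  assume "v \<in> Vset A B"
  then have "A ! fst v \<in> {x \<in> set A \<union> set B. x \<le> A ! fst v}" unfolding Vset_def by auto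
  then have "{x \<in> set A \<union> set B. x \<le> A ! fst v} \<noteq> {}" by blast
  then show ?thesis unfolding rV_def by (simp add: Suc_le_eq card_gt_0_iff)
qed

lemma rJ_le_maxJ: "u \<in> Vset A B \<Longrightarrow> rJ A B u \<le> maxJ A B"
  unfolding maxJ_def using Vset_finite by (intro Max_ge) auto

theorem mainTheorem6:
  fixes A B :: "('a::linorder) list"
  shows "(\<forall>k < length (vlist A B).
            let v = vlist A B ! k; INC = snd (fwd_state A B (Suc k))
            in INC v = 1 + Max (insert 0 {INC u | u. (u, v) \<in> Eset A B}))
       \<and> (\<forall>k < length (vlist A B).
            let v = rev (vlist A B) ! k; DEC = snd (bwd_state A B (Suc k))
            in DEC v = 1 + Max (insert 0 {DEC w | w. w \<in> Vset A B \<and> fst v < fst w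
                                          \<and> snd v < snd w \<and> A ! fst w < A ! fst v}))"
proof (intro conjI allI impI)
  fix k assume k: "k < length (vlist A B)"
  define xs where "xs = vlist A B"
  have "xs!k \<in> set xs" by (rule nth_mem) (simp add: xs_def k)
  then have vV: "xs!k \<in> Vset A B" by (simp add: xs_def vlist_set)
  have H: "(u \<in> set (take k xs) \<and> rJ A B u \<le> rJ A B (xs!k) - 1
                   \<and> rV A B u \<le> rV A B (xs!k) - 1) \<longleftrightarrow> (u, xs!k) \<in> Eset A B" for u
  proof (cases "u \<in> Vset A B")
    case True
    have tm: "u \<in> set (take k xs) \<longleftrightarrow> lexlt u (xs!k)"
      unfolding xs_def by (rule take_mem[OF vlist_sorted lexlt_asym]) (use k True vlist_set[of A B] in simp_all)
    have "rJ A B u \<le> rJ A B (xs!k) - 1 \<longleftrightarrow> rJ A B u < rJ A B (xs!k)"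
      using rJ_pos[of A B "xs!k"] by linarith
    moreover have "rV A B u \<le> rV A B (xs!k) - 1 \<longleftrightarrow> rV A B u < rV A B (xs!k)"
      using rV_pos[OF vV] by linarith
    moreover have e: "(u, xs!k) \<in> Eset A B \<longleftrightarrow> fst u < fst (xs!k) \<and> snd u < snd (xs!k) \<and> A ! fst u < A ! fst (xs!k)"
      using True vV by (simp add: Eset_def)
    moreover have "lexlt u (xs!k) \<and> snd u < snd (xs!k) \<and> A ! fst u < A ! fst (xs!k) \<longleftrightarrow>
        fst u < fst (xs!k) \<and> snd u < snd (xs!k) \<and> A ! fst u < A ! fst (xs!k)"
      unfolding lexlt_def by auto
    ultimately show ?thesis using tm rJ_lt[OF True vV] rV_lt[OF True vV]
      by presburger
  next
    case False
    then have "u \<notin> set (take k xs)" using vlist_set[of A B] in_set_takeD[of u k "vlist A B"] unfolding xs_def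
      by blast
    then show ?thesis using False unfolding Eset_def by auto
  qed
  have H': "(u \<in> set (take k xs) \<and> fst (rJ A B u, rV A B u) \<le> fst (rJ A B (xs!k), rV A B (xs!k)) - 1
                   \<and> snd (rJ A B u, rV A B u) \<le> snd (rJ A B (xs!k), rV A B (xs!k)) - 1) \<longleftrightarrow> (u, xs!k) \<in> Eset A B" for u
    using H[of u] by (simp only: fst_conv snd_conv)
  have "snd (foldl (fwd_step A B) ([], \<lambda>_. 0) (take (Suc k) xs)) (xs!k)
     = 1 + Max (insert 0 {snd (foldl (fwd_step A B) ([], \<lambda>_. 0) (take (Suc k) xs)) u | u. (u, xs!k) \<in> Eset A B})"
    unfolding fwd_gstep
    by (rule key_gstep[where R = "\<lambda>u. (u, xs!k) \<in> Eset A B" and P = "\<lambda>v. (rJ A B v, rV A B v)", OF _ _ H'])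
       (simp_all add: xs_def vlist_distinct k)
  then show "let v = vlist A B ! k; INC = snd (fwd_state A B (Suc k))
            in INC v = 1 + Max (insert 0 {INC u | u. (u, v) \<in> Eset A B})"
    by (simp add: fwd_state_def xs_def Let_def)
next
  fix k assume k0: "k < length (vlist A B)"
  define xs where "xs = rev (vlist A B)"
  have k: "k < length xs" using k0 unfolding xs_def by simp
  have setx: "set xs = Vset A B" unfolding xs_def by (simp add: vlist_set)
  have "xs!k \<in> set xs" by (rule nth_mem) (simp add: k)
  then have vV: "xs!k \<in> Vset A B" by (simp add: setx)
  have sx: "sorted_wrt (\<lambda>x y. lexlt y x) xs" unfolding xs_def sorted_wrt_rev by (rule vlist_sorted)
  define R where "R = (\<lambda>w. w \<in> Vset A B \<and> fst (xs!k) < fst w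
                                          \<and> snd (xs!k) < snd w \<and> A ! fst w < A ! fst (xs!k))"
  let ?P = "\<lambda>v. (maxJ A B - rJ A B v + 1, rV A B v)"
  have H: "(u \<in> set (take k xs) \<and> fst (?P u) \<le> fst (?P (xs!k)) - 1
                   \<and> snd (?P u) \<le> snd (?P (xs!k)) - 1) \<longleftrightarrow> R u" for u
  proof (cases "u \<in> Vset A B")
    case True
    have tm: "u \<in> set (take k xs) \<longleftrightarrow> lexlt (xs!k) u"
      by (rule take_mem[OF sx]) (use k True setx lexlt_asym in simp_all)
    have "fst (?P u) \<le> fst (?P (xs!k)) - 1 \<longleftrightarrow> rJ A B (xs!k) < rJ A B u"
      using rJ_le_maxJ[OF True] rJ_le_maxJ[OF vV] by (simp; linarith)
    moreover have "rV A B u \<le> rV A B (xs!k) - 1 \<longleftrightarrow> rV A B u < rV A B (xs!k)"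
      using rV_pos[OF vV] by linarith
    moreover have e: "R u \<longleftrightarrow> fst (xs!k) < fst u \<and> snd (xs!k) < snd u \<and> A ! fst u < A ! fst (xs!k)"
      using True by (simp add: R_def)
    moreover have "lexlt (xs!k) u \<and> snd (xs!k) < snd u \<and> A ! fst u < A ! fst (xs!k) \<longleftrightarrow>
        fst (xs!k) < fst u \<and> snd (xs!k) < snd u \<and> A ! fst u < A ! fst (xs!k)"
      unfolding lexlt_def by auto
    ultimately show ?thesis using tm rJ_lt[OF vV True] rV_lt[OF True vV]
      by (simp only: fst_conv snd_conv)
  next
    case False
    then have "u \<notin> set (take k xs)" using setx in_set_takeD[of u k xs] by blast
    then show ?thesis using False unfolding R_def by auto
  qed
  have H': "(u \<in> set (take k xs) \<and> fst (maxJ A B - rJ A B u + 1, rV A B u) \<le> fst (maxJ A B - rJ A B (xs!k) + 1, rV A B (xs!k)) - 1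
                   \<and> snd (maxJ A B - rJ A B u + 1, rV A B u) \<le> snd (maxJ A B - rJ A B (xs!k) + 1, rV A B (xs!k)) - 1) \<longleftrightarrow> R u" for u
    using H[of u] by (simp only: fst_conv snd_conv)
  have dx: "distinct xs" unfolding xs_def using vlist_distinct by simp
  have "snd (foldl (bwd_step A B) ([], \<lambda>_. 0) (take (Suc k) xs)) (xs!k)
     = 1 + Max (insert 0 {snd (foldl (bwd_step A B) ([], \<lambda>_. 0) (take (Suc k) xs)) u | u. R u})"
    unfolding bwd_gstep
    by (rule key_gstep[where R = R and P = ?P, OF dx k H'])
  then show "let v = rev (vlist A B) ! k; DEC = snd (bwd_state A B (Suc k))
            in DEC v = 1 + Max (insert 0 {DEC w | w. w \<in> Vset A B \<and> fst v < fst w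
                                          \<and> snd v < snd w \<and> A ! fst w < A ! fst v})"
    by (simp add: bwd_state_def xs_def Let_def R_def)
qed

end
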